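(* Let $X\in\mathbb{R}^{n\times p}$ with columns $\mathbf x_1,\dots,\mathbf x_p$, let $\mathbf y\in\mathbb{R}^n$, $\mathbf y\neq\mathbf 0$, let $\|X^T\mathbf y\|_\infty\ge\lambda_1>\lambda_2>0$, and fix $j$ with $\mathbf x_j\ne\mathbf 0$. Define $$\Omega=\Big\{\boldsymbol\theta\in\mathbb{R}^n:\ \big\langle\boldsymbol\theta_1^*-\tfrac{\mathbf y}{\lambda_1},\boldsymbol\theta-\boldsymbol\theta_1^*\big\rangle\ge0,\ \big\langle\boldsymbol\theta-\tfrac{\mathbf y}{\lambda_2},\boldsymbol\theta_1^*-\boldsymbol\theta\big\rangle\ge0\Big\},$$ $u_j^+(\lambda_2)=\max_{\boldsymbol\theta\in\Omega}\langle\mathbf x_j,\boldsymbol\theta\rangle$ and $u_j^-(\lambda_2)=\max_{\boldsymbol\theta\in\Omega}\langle-\mathbf x_j,\boldsymbol\theta\rangle$. Let $\mathbf a=\frac{\mathbf y}{\lambda_1}-\boldsymbol\theta_1^*$, $\mathbf b=\frac{\mathbf y}{\lambda_2}-\boldsymbol\theta_1^*$, and when $\mathbf a\ne\mathbf 0$ let $\mathbf x_j^\perp=\mathbf x_j-\mathbf a\frac{\langle\mathbf x_j,\mathbf a\rangle}{\|\mathbf a\|_2^2}$ and $\mathbf y^\perp=\mathbf y-\mathbf a\frac{\langle\mathbf y,\mathbf a\rangle}{\|\mathbf a\|_2^2}$. Consider the formulas (P1) $u_j^+(\lambda_2)=\langle\mathbf x_j,\boldsymbol\theta_1^*\rangle+\frac{\frac1{\lambda_2}-\frac1{\lambda_1}}{2}\big[\|\mathbf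 x_j^\perp\|_2\|\mathbf y^\perp\|_2+\langle\mathbf x_j^\perp,\mathbf y^\perp\rangle\big]$; (N1) $u_j^-(\lambda_2)=-\langle\mathbf x_j,\boldsymbol\theta_1^*\rangle+\frac{\frac1{\lambda_2}-\frac1{\lambda_1}}{2}\big[\|\mathbf x_j^\perp\|_2\|\mathbf y^\perp\|_2-\langle\mathbf x_j^\perp,\mathbf y^\perp\rangle\big]$; (N2) $u_j^-(\lambda_2)=-\langle\mathbf x_j,\boldsymbol\theta_1^*\rangle+\frac12\big[\|\mathbf x_j\|_2\|\mathbf b\|_2-\langle\mathbf x_j,\mathbf b\rangle\big]$; (P2) $u_j^+(\lambda_2)=\langle\mathbf x_j,\boldsymbol\theta_1^*\rangle+\frac12\big[\|\mathbf x_j\|_2\|\mathbf b\|_2+\langle\mathbf x_j,\mathbf b\rangle\big]$. Then: 1) If $\mathbf a\ne\mathbf 0$ and $\frac{\langle\mathbf b,\mathbf a\rangle}{\|\mathbf b\|_2\|\mathbf a\|_2}>\frac{|\langle\mathbf x_j,\mathbf a\rangle|}{\|\mathbf x_j\|_2\|\mathbf a\|_2}$, then (P1) and (N1) hold. 2) If $\langle\mathbf x_j,\mathbf a\rangle>0$ and $\frac{\langle\mathbf b,\mathbf a\rangle}{\|\mathbf b\|_2\|\mathbf a\|_2}\le\frac{\langle\mathbf x_j,\mathbf a\rangle}{\|\mathbf x_j\|_2\|\mathbf a\|_2}$, then (P1) and (N2) hold. 3) If $\langle\mathbf x_j,\mathbf a\rangle<0$ and $\frac{\langle\mathbf b,\mathbf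 a\rangle}{\|\mathbf b\|_2\|\mathbf a\|_2}\le\frac{-\langle\mathbf x_j,\mathbf a\rangle}{\|\mathbf x_j\|_2\|\mathbf a\|_2}$, then (P2) and (N1) hold. 4) If $\mathbf a=\mathbf 0$, then (N2) and (P2) hold.
   Context: $X\in\mathbb{R}^{n\times p}$ is a matrix with columns $\mathbf x_j$ and $\mathbf y\in\mathbb{R}^n$ a vector. Let $F=\{\boldsymbol\theta\in\mathbb{R}^n:\|X^T\boldsymbol\theta\|_\infty\le 1\}$. For $\lambda>0$, the Lasso dual optimum $\boldsymbol\theta^*(\lambda)$ is the unique minimizer of $\frac12\|\boldsymbol\theta-\mathbf y/\lambda\|_2^2$ over $\boldsymbol\theta\in F$, i.e. the Euclidean projection of $\mathbf y/\lambda$ onto $F$. Write $\boldsymbol\theta_1^*=\boldsymbol\theta^*(\lambda_1)$. *)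

theory Defs
  imports "HOL-Analysis.Analysis"
begin

text \<open>X has n rows and p columns: X :: real^'p^'n; column j is  column j X.\<close>

definition dual_feasible :: "real^'p^'n \<Rightarrow> (real^'n) set" where
  "dual_feasible X = {\<theta>. infnorm (transpose X *v \<theta>) \<le> 1}"

text \<open>Lasso dual optimum: Euclidean projection of y/lambda onto F.\<close>
definition dual_opt :: "real^'p^'n \<Rightarrow> real^'n \<Rightarrow> real \<Rightarrow> real^'n" where
  "dual_opt X y lam = closest_point (dual_feasible X) ((1/lam) *\<^sub>R y)"

definition Omega :: "real^'p^'n \<Rightarrow> real^'n \<Rightarrow> real \<Rightarrow> real \<Rightarrow> (real^'n) set" where
  "Omega X y l1 l2 = {\<theta>.
     (dual_opt X y l1 - (1/l1) *\<^sub>R y) \<bullet> (\<theta> - dual_opt X y l1) \<ge> 0 \<and>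
     (\<theta> - (1/l2) *\<^sub>R y) \<bullet> (dual_opt X y l1 - \<theta>) \<ge> 0}"

definition u_plus :: "real^'p^'n \<Rightarrow> real^'n \<Rightarrow> real \<Rightarrow> real \<Rightarrow> 'p \<Rightarrow> real" where
  "u_plus X y l1 l2 j = Sup ((\<lambda>\<theta>. column j X \<bullet> \<theta>) ` Omega X y l1 l2)"

definition u_minus :: "real^'p^'n \<Rightarrow> real^'n \<Rightarrow> real \<Rightarrow> real \<Rightarrow> 'p \<Rightarrow> real" where
  "u_minus X y l1 l2 j = Sup ((\<lambda>\<theta>. (- column j X) \<bullet> \<theta>) ` Omega X y l1 l2)"

end

theory Submission
  imports Defs
begin


lemma ball_bound:
  fixes x b v :: "'a::real_inner"
  assumes "norm v ^ 2 \<le> v \<bullet> b"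
  shows "x \<bullet> v \<le> (norm x * norm b + x \<bullet> b) / 2"
proof -
  have "norm (v - b /\<^sub>R 2) ^ 2 = norm v ^ 2 - v \<bullet> b + norm b ^ 2 / 4"
    by (simp add: power2_norm_eq_inner inner_diff_left inner_diff_right inner_commute algebra_simps)
  also have "\<dots> \<le> (norm b / 2) ^ 2" using assms by (simp add: power_divide)
  finally have n: "norm (v - b /\<^sub>R 2) \<le> norm b / 2"
    by simp
  have "x \<bullet> v = x \<bullet> b / 2 + x \<bullet> (v - b /\<^sub>R 2)" by (simp add: inner_diff_right)
  also have "x \<bullet> (v - b /\<^sub>R 2) \<le> norm x * norm (v - b /\<^sub>R 2)" by (rule norm_cauchy_schwarz)
  also have "\<dots> \<le> norm x * (norm b / 2)" using mult_left_mono[OF n norm_ge_zero] by simp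
  finally show ?thesis by simp
qed

lemma witness_ball:
  fixes x b :: "'a::real_inner"
  defines "k \<equiv> norm b / (2 * norm x)"
  defines "p \<equiv> b /\<^sub>R 2 + k *\<^sub>R x"
  shows "norm p ^ 2 \<le> p \<bullet> b" and "x \<bullet> p = (norm x * norm b + x \<bullet> b) / 2"
    and "a \<bullet> p = a \<bullet> b / 2 + k * (a \<bullet> x)"
proof -
  have kk: "k^2 * norm x ^ 2 \<le> norm b ^ 2 / 4" and kx: "k * norm x ^2 = norm x * norm b / 2 \<or> x = 0"
    unfolding k_def by (auto simp: power_divide field_simps power2_eq_square)
  have "norm p ^ 2 = norm b ^ 2 / 4 + k * (x \<bullet> b) + k^2 * norm x ^ 2"
    unfolding p_def power2_norm_eq_inner by (simp add: inner_add_left inner_add_right inner_commute algebra_simps power2_eq_square)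
  moreover have "p \<bullet> b = norm b ^ 2 / 2 + k * (x \<bullet> b)"
    unfolding p_def power2_norm_eq_inner by (simp add: inner_add_left inner_add_right inner_commute)
  ultimately show "norm p ^ 2 \<le> p \<bullet> b" using kk by simp
  show "x \<bullet> p = (norm x * norm b + x \<bullet> b) / 2"
    unfolding p_def using kx by (auto simp: inner_add_right power2_norm_eq_inner)
  show "a \<bullet> p = a \<bullet> b / 2 + k * (a \<bullet> x)"
    unfolding p_def by (simp add: inner_add_right)
qed

lemma caseA:
  fixes x a b :: "'a::real_inner"
  assumes "(a \<bullet> b) * norm x + norm b * (a \<bullet> x) \<le> 0" "x \<noteq> 0"
  shows "\<exists>v. norm v ^ 2 \<le> v \<bullet> b \<and> a \<bullet> v \<le> 0 \<and> x \<bullet> v = (norm x * norm b + x \<bullet> b) / 2"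
proof -
  define k where "k = norm b / (2 * norm x)"
  define p where "p = b /\<^sub>R 2 + k *\<^sub>R x"
  note w = witness_ball[where x=x and b=b, folded k_def, folded p_def]
  have "a \<bullet> p = ((a \<bullet> b) * norm x + norm b * (a \<bullet> x)) / (2 * norm x)"
    using w(3)[where a=a] assms(2) unfolding k_def by (simp add: field_simps)
  also have "\<dots> \<le> 0" using assms by (simp add: divide_nonpos_pos)
  finally show ?thesis using w(1,2) by blast
qed

lemma caseB:
  fixes x a b :: "'a::real_inner"
  assumes a0: "a \<noteq> 0" and cnd: "(a \<bullet> b) * norm x + norm b * (a \<bullet> x) > 0"
  defines "xp \<equiv> x - ((x \<bullet> a) / (norm a)\<^sup>2) *\<^sub>R a"
  defines "bp \<equiv> b - ((b \<bullet> a) / (norm a)\<^sup>2) *\<^sub>R a"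
  shows "\<forall>v. norm v ^ 2 \<le> v \<bullet> b \<and> a \<bullet> v \<le> 0 \<longrightarrow> x \<bullet> v \<le> (norm xp * norm bp + xp \<bullet> bp) / 2"
    and "\<exists>v. norm v ^ 2 \<le> v \<bullet> b \<and> a \<bullet> v \<le> 0 \<and> x \<bullet> v = (norm xp * norm bp + xp \<bullet> bp) / 2"
proof -
  have na: "norm a ^ 2 = a \<bullet> a" by (simp add: power2_norm_eq_inner)
  have na0: "a \<bullet> a \<noteq> 0" using a0 by simp
  have perp: "z \<bullet> (w - ((w \<bullet> a) / (norm a)\<^sup>2) *\<^sub>R a) = z \<bullet> w" if "z \<bullet> a = 0" for z w
    using that by (simp add: inner_diff_right)
  have aperp: "(w - ((w \<bullet> a) / (norm a)\<^sup>2) *\<^sub>R a) \<bullet> a = 0" for w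
    using na0 by (simp add: inner_diff_left na)
  have axp: "xp \<bullet> a = 0" and abp: "bp \<bullet> a = 0" unfolding xp_def bp_def by (rule aperp)+
  have hyp: "x \<bullet> z \<le> (norm xp * norm bp + xp \<bullet> bp) / 2" if z: "norm z ^ 2 \<le> z \<bullet> b" "z \<bullet> a = 0" for z
  proof -
    have "z \<bullet> bp = z \<bullet> b" unfolding bp_def using perp[OF z(2)] .
    hence "norm z ^ 2 \<le> z \<bullet> bp" using z by simp
    from ball_bound[OF this, of xp] have "xp \<bullet> z \<le> (norm xp * norm bp + xp \<bullet> bp) / 2" .
    moreover have "xp \<bullet> z = x \<bullet> z" using perp[OF z(2), of x] unfolding xp_def by (simp add: inner_commute)
    ultimately show ?thesis by simp
  qed
  have x0: "x \<noteq> 0" using cnd by auto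
  define k where "k = norm b / (2 * norm x)"
  define p where "p = b /\<^sub>R 2 + k *\<^sub>R x"
  note w = witness_ball[where x=x and b=b, folded k_def, folded p_def]
  have "a \<bullet> p = ((a \<bullet> b) * norm x + norm b * (a \<bullet> x)) / (2 * norm x)"
    using w(3)[where a=a] x0 unfolding k_def by (simp add: field_simps)
  also have "\<dots> > 0" using cnd x0 by simp
  finally have ap: "a \<bullet> p > 0" .
  show "\<forall>v. norm v ^ 2 \<le> v \<bullet> b \<and> a \<bullet> v \<le> 0 \<longrightarrow> x \<bullet> v \<le> (norm xp * norm bp + xp \<bullet> bp) / 2"
  proof (intro allI impI)
    fix v assume v: "norm v ^ 2 \<le> v \<bullet> b \<and> a \<bullet> v \<le> 0"
    show "x \<bullet> v \<le> (norm xp * norm bp + xp \<bullet> bp) / 2"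
    proof (cases "a \<bullet> v = 0")
      case True then show ?thesis using hyp[of v] v by (simp add: inner_commute)
    next
      case False
      hence av: "a \<bullet> v < 0" using v by simp
      define t where "t = (a \<bullet> v) / (a \<bullet> v - a \<bullet> p)"
      have t0: "0 \<le> t" and t1: "t \<le> 1" unfolding t_def using av ap by (auto simp: divide_simps)
      define z where "z = (1 - t) *\<^sub>R v + t *\<^sub>R p"
      have "z \<bullet> a = (1 - t) * (a \<bullet> v) + t * (a \<bullet> p)" unfolding z_def
        by (simp add: inner_add_left inner_add_right inner_commute del: inner_scaleR_left inner_scaleR_right) (simp add: inner_commute)
      also have "\<dots> = 0" unfolding t_def using av ap by (simp add: field_simps)
      finally have az: "z \<bullet> a = 0" .
      have "(1 - t) * norm v ^ 2 + t * norm p ^ 2 - norm z ^ 2 = t * (1 - t) * norm (v - p) ^ 2"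
        unfolding z_def power2_norm_eq_inner
        by (simp add: inner_add_left inner_add_right inner_diff_left inner_diff_right inner_commute algebra_simps)
      moreover have "0 \<le> t * (1 - t) * norm (v - p) ^ 2" using t0 t1 by simp
      ultimately have "norm z ^ 2 \<le> (1 - t) * norm v ^ 2 + t * norm p ^ 2" by linarith
      also have "\<dots> \<le> (1 - t) * (v \<bullet> b) + t * (p \<bullet> b)"
        using v w(1) t0 t1 by (intro add_mono mult_left_mono) auto
      also have "\<dots> = z \<bullet> b" unfolding z_def by (simp add: inner_add_left)
      finally have zb: "norm z ^ 2 \<le> z \<bullet> b" .
      have "x \<bullet> v \<le> x \<bullet> p" using ball_bound[of v b x] v w(2) by simp
      hence "x \<bullet> v \<le> x \<bullet> z" unfolding z_def using t0 t1
        by (simp add: inner_add_right algebra_simps) (metis mult_left_mono)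
      also have "\<dots> \<le> (norm xp * norm bp + xp \<bullet> bp) / 2" using hyp[OF zb az] .
      finally show ?thesis .
    qed
  qed
  define m where "m = norm bp / (2 * norm xp)"
  define z where "z = bp /\<^sub>R 2 + m *\<^sub>R xp"
  note w2 = witness_ball[where x=xp and b=bp, folded m_def, folded z_def]
  have az: "z \<bullet> a = 0" unfolding z_def using axp abp by (simp add: inner_add_left)
  have "z \<bullet> bp = z \<bullet> b" unfolding bp_def using perp[OF az] .
  moreover have "xp \<bullet> z = x \<bullet> z" using perp[OF az, of x] unfolding xp_def by (simp add: inner_commute)
  ultimately show "\<exists>v. norm v ^ 2 \<le> v \<bullet> b \<and> a \<bullet> v \<le> 0 \<and> x \<bullet> v = (norm xp * norm bp + xp \<bullet> bp) / 2"
    using w2(1,2) az by (intro exI[of _ z]) (auto simp: inner_commute)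
qed

lemma sup_Omega:
  fixes x t1 :: "'a::real_inner"
  assumes Om: "\<And>\<theta>. \<theta> \<in> Om \<longleftrightarrow> P (\<theta> - t1)"
    and up: "\<forall>v. P v \<longrightarrow> x \<bullet> v \<le> M" and ex: "\<exists>v. P v \<and> x \<bullet> v = M"
  shows "Sup ((\<lambda>\<theta>. x \<bullet> \<theta>) ` Om) = x \<bullet> t1 + M"
proof (rule cSup_eq_maximum)
  from ex obtain v where v: "P v" "x \<bullet> v = M" by blast
  have "t1 + v \<in> Om" using Om[of "t1 + v"] v by simp
  moreover have "x \<bullet> (t1 + v) = x \<bullet> t1 + M" using v by (simp add: inner_add_right)
  ultimately show "x \<bullet> t1 + M \<in> (\<lambda>\<theta>. x \<bullet> \<theta>) ` Om" by (metis image_eqI)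
next
  fix r assume "r \<in> (\<lambda>\<theta>. x \<bullet> \<theta>) ` Om"
  then obtain \<theta> where th: "\<theta> \<in> Om" "r = x \<bullet> \<theta>" by blast
  have "x \<bullet> (\<theta> - t1) \<le> M" using up Om th(1) by blast
  thus "r \<le> x \<bullet> t1 + M" using th(2) by (simp add: inner_diff_right)
qed

lemma F_convex: fixes X :: "real^'p^'n" shows "convex (dual_feasible X)"
proof (rule convexI)
  fix x y :: "real^'n" and u v :: real
  assume "x \<in> dual_feasible X" "y \<in> dual_feasible X" "0 \<le> u" "0 \<le> v" "u + v = 1"
  hence h: "infnorm (transpose X *v x) \<le> 1" "infnorm (transpose X *v y) \<le> 1" "0 \<le> u" "0 \<le> v" "u + v = 1"
    by (auto simp: dual_feasible_def)
  have "transpose X *v (u *\<^sub>R x + v *\<^sub>R y) = u *\<^sub>R (transpose X *v x) + v *\<^sub>R (transpose X *v y)"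
    by (simp add: matrix_vector_right_distrib matrix_vector_mult_scaleR)
  hence "infnorm (transpose X *v (u *\<^sub>R x + v *\<^sub>R y)) \<le> u * infnorm (transpose X *v x) + v * infnorm (transpose X *v y)"
    using infnorm_triangle[of "u *\<^sub>R (transpose X *v x)" "v *\<^sub>R (transpose X *v y)"] h(3,4)
    by (simp add: infnorm_mul)
  also have "\<dots> \<le> u * 1 + v * 1" using h by (intro add_mono mult_left_mono) auto
  finally show "u *\<^sub>R x + v *\<^sub>R y \<in> dual_feasible X" using h(5) by (simp add: dual_feasible_def)
qed

lemma F_closed: fixes X :: "real^'p^'n" shows "closed (dual_feasible X)"
proof -
  have "continuous_on UNIV (\<lambda>\<theta>::real^'n. infnorm (transpose X *v \<theta>))"
    by (intro continuous_at_imp_continuous_on ballI continuous_infnorm linear_continuous_at matrix_vector_mul_bounded_linear)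
  from closed_Collect_le[OF this continuous_on_const] show ?thesis
    unfolding dual_feasible_def by simp
qed

lemma F_zero: "0 \<in> dual_feasible X"
  unfolding dual_feasible_def by (simp add: infnorm_0)

lemma frac_cmp:
  fixes u w na nb nx :: real
  assumes "na > 0" "nb > 0" "nx > 0"
  shows "u / (nb * na) \<le> w / (nx * na) \<longleftrightarrow> u * nx \<le> w * nb"
    and "u / (nb * na) < w / (nx * na) \<longleftrightarrow> u * nx < w * nb"
  using assms by (simp_all add: divide_simps mult.commute mult.left_commute)

theorem theorem3:
  fixes X :: "real^'p^'n" and y :: "real^'n" and l1 l2 :: real and j :: 'p
  assumes "y \<noteq> 0"
    and "infnorm (transpose X *v y) \<ge> l1" and "l1 > l2" and "l2 > 0"
    and "column j X \<noteq> 0"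
  defines "\<theta>1 \<equiv> dual_opt X y l1"
  defines "xj \<equiv> column j X"
  defines "a \<equiv> (1/l1) *\<^sub>R y - \<theta>1"
  defines "b \<equiv> (1/l2) *\<^sub>R y - \<theta>1"
  defines "xp \<equiv> xj - ((xj \<bullet> a) / (norm a)\<^sup>2) *\<^sub>R a"
  defines "yp \<equiv> y - ((y \<bullet> a) / (norm a)\<^sup>2) *\<^sub>R a"
  defines "P1 \<equiv> u_plus X y l1 l2 j = xj \<bullet> \<theta>1 + ((1/l2 - 1/l1) / 2) * (norm xp * norm yp + xp \<bullet> yp)"
  defines "N1 \<equiv> u_minus X y l1 l2 j = - (xj \<bullet> \<theta>1) + ((1/l2 - 1/l1) / 2) * (norm xp * norm yp - xp \<bullet> yp)"
  defines "N2 \<equiv> u_minus X y l1 l2 j = - (xj \<bullet> \<theta>1) + (1/2) * (norm xj * norm b - xj \<bullet> b)"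
  defines "P2 \<equiv> u_plus X y l1 l2 j = xj \<bullet> \<theta>1 + (1/2) * (norm xj * norm b + xj \<bullet> b)"
  shows "(a \<noteq> 0 \<and> (b \<bullet> a) / (norm b * norm a) > \<bar>xj \<bullet> a\<bar> / (norm xj * norm a) \<longrightarrow> P1 \<and> N1)
       \<and> (xj \<bullet> a > 0 \<and> (b \<bullet> a) / (norm b * norm a) \<le> (xj \<bullet> a) / (norm xj * norm a) \<longrightarrow> P1 \<and> N2)
       \<and> (xj \<bullet> a < 0 \<and> (b \<bullet> a) / (norm b * norm a) \<le> - (xj \<bullet> a) / (norm xj * norm a) \<longrightarrow> P2 \<and> N1)
       \<and> (a = 0 \<longrightarrow> N2 \<and> P2)"
  proof -
  have xj0: "xj \<noteq> 0" using assms(5) unfolding xj_def .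
  have nx: "norm xj > 0" using xj0 by simp
  have at1: "a \<bullet> \<theta>1 \<ge> 0"
    using closest_point_dot[OF F_convex[of X] F_closed[of X] F_zero[of X], of "(1/l1) *\<^sub>R y"]
    unfolding a_def \<theta>1_def dual_opt_def by (simp add: inner_diff_right)
  define c where "c = 1/l2 - 1/l1"
  have c0: "c > 0" unfolding c_def using assms(3,4) by (simp add: frac_less2)
  have bac: "b = a + c *\<^sub>R y" unfolding a_def b_def c_def by (simp add: algebra_simps)
  have Om: "\<theta> \<in> Omega X y l1 l2 \<longleftrightarrow> (norm (\<theta> - \<theta>1) ^ 2 \<le> (\<theta> - \<theta>1) \<bullet> b \<and> a \<bullet> (\<theta> - \<theta>1) \<le> 0)" for \<theta>
  proof -
    have e1: "(\<theta>1 - (1/l1) *\<^sub>R y) \<bullet> (\<theta> - \<theta>1) = - (a \<bullet> (\<theta> - \<theta>1))"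
      unfolding a_def by (simp add: inner_diff_left inner_diff_right)
    have e2: "(\<theta> - (1/l2) *\<^sub>R y) \<bullet> (\<theta>1 - \<theta>) = (\<theta> - \<theta>1) \<bullet> b - norm (\<theta> - \<theta>1) ^ 2"
      unfolding b_def power2_norm_eq_inner by (simp add: inner_diff_left inner_diff_right inner_commute diff_divide_distrib)
    show ?thesis unfolding Omega_def \<theta>1_def[symmetric] mem_Collect_eq e1 e2 by linarith
  qed
  have upl: "u_plus X y l1 l2 j = Sup ((\<lambda>\<theta>. xj \<bullet> \<theta>) ` Omega X y l1 l2)" by (simp add: u_plus_def xj_def)
  have umi: "u_minus X y l1 l2 j = Sup ((\<lambda>\<theta>. (- xj) \<bullet> \<theta>) ` Omega X y l1 l2)" by (simp add: u_minus_def xj_def)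
  have bp: "b - ((b \<bullet> a) / (norm a)\<^sup>2) *\<^sub>R a = c *\<^sub>R yp" if a0: "a \<noteq> 0"
  proof -
    have "(b \<bullet> a) / (norm a)\<^sup>2 = 1 + c * ((y \<bullet> a) / (norm a)\<^sup>2)"
      using a0 unfolding bac power2_norm_eq_inner by (simp add: inner_add_left field_simps)
    thus ?thesis unfolding yp_def bac by (simp add: algebra_simps)
  qed
  have xpm: "(- xj) - (((- xj) \<bullet> a) / (norm a)\<^sup>2) *\<^sub>R a = - xp" unfolding xp_def by simp
  have ab: "a \<bullet> b > 0" if a0: "a \<noteq> 0"
  proof -
    have "(1/l1) *\<^sub>R y = a + \<theta>1" unfolding a_def by simp
    hence "(1/l1) * (y \<bullet> a) = a \<bullet> a + a \<bullet> \<theta>1" by (metis inner_add_left inner_commute inner_scaleR_left)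
    moreover have "a \<bullet> a > 0" using a0 by simp
    ultimately have "(1/l1) * (y \<bullet> a) > 0" using at1 by linarith
    hence "y \<bullet> a > 0" using assms(3,4) by (simp add: zero_less_divide_iff)
    thus ?thesis using \<open>a \<bullet> a > 0\<close> c0 unfolding bac by (simp add: inner_add_right inner_commute add_pos_pos)
  qed
  have hP1: "P1" if a0: "a \<noteq> 0" and cnd: "(a \<bullet> b) * norm xj + norm b * (a \<bullet> xj) > 0"
  proof -
    note cb = caseB[OF a0 cnd, folded xp_def, unfolded bp[OF a0]]
    have "u_plus X y l1 l2 j = xj \<bullet> \<theta>1 + (norm xp * norm (c *\<^sub>R yp) + xp \<bullet> (c *\<^sub>R yp)) / 2"
      unfolding upl by (rule sup_Omega[where P="\<lambda>v. norm v ^ 2 \<le> v \<bullet> b \<and> a \<bullet> v \<le> 0"]) (use Om cb in auto)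
    thus ?thesis unfolding P1_def c_def[symmetric] using c0 by (simp add: algebra_simps)
  qed
  have hN1: "N1" if a0: "a \<noteq> 0" and cnd: "(a \<bullet> b) * norm xj - norm b * (a \<bullet> xj) > 0"
  proof -
    have cnd': "(a \<bullet> b) * norm (-xj) + norm b * (a \<bullet> (-xj)) > 0" using cnd by simp
    note cb = caseB[OF a0 cnd', unfolded xpm bp[OF a0]]
    have "u_minus X y l1 l2 j = (-xj) \<bullet> \<theta>1 + (norm (-xp) * norm (c *\<^sub>R yp) + (-xp) \<bullet> (c *\<^sub>R yp)) / 2"
      unfolding umi by (rule sup_Omega[where P="\<lambda>v. norm v ^ 2 \<le> v \<bullet> b \<and> a \<bullet> v \<le> 0"]) (use Om cb in auto)
    thus ?thesis unfolding N1_def c_def[symmetric] using c0 by (simp add: algebra_simps)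
  qed
  have hP2: "P2" if cnd: "(a \<bullet> b) * norm xj + norm b * (a \<bullet> xj) \<le> 0"
  proof -
    have "u_plus X y l1 l2 j = xj \<bullet> \<theta>1 + (norm xj * norm b + xj \<bullet> b) / 2"
      unfolding upl by (rule sup_Omega[where P="\<lambda>v. norm v ^ 2 \<le> v \<bullet> b \<and> a \<bullet> v \<le> 0"]) (use Om caseA[OF cnd xj0] ball_bound[where b=b and x=xj] in blast)+
    thus ?thesis unfolding P2_def by (simp add: algebra_simps)
  qed
  have hN2: "N2" if cnd: "(a \<bullet> b) * norm xj - norm b * (a \<bullet> xj) \<le> 0"
  proof -
    have cnd': "(a \<bullet> b) * norm (-xj) + norm b * (a \<bullet> (-xj)) \<le> 0" using cnd by simp
    have "u_minus X y l1 l2 j = (-xj) \<bullet> \<theta>1 + (norm (-xj) * norm b + (-xj) \<bullet> b) / 2"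
      unfolding umi by (rule sup_Omega[where P="\<lambda>v. norm v ^ 2 \<le> v \<bullet> b \<and> a \<bullet> v \<le> 0"]) (use Om caseA[OF cnd'] xj0 ball_bound[where b=b and x="-xj"] in auto)
    thus ?thesis unfolding N2_def by (simp add: algebra_simps)
  qed
  have nb: "norm b > 0" if "a \<noteq> 0" using ab[OF that] by auto
  have na: "norm a > 0" if "a \<noteq> 0" using that by simp
  show ?thesis
  proof (intro conjI[of "_ \<longrightarrow> _"] impI)
    assume h: "a \<noteq> 0 \<and> (b \<bullet> a) / (norm b * norm a) > \<bar>xj \<bullet> a\<bar> / (norm xj * norm a)"
    hence a0: "a \<noteq> 0" by blast
    have "(b \<bullet> a) * norm xj > \<bar>xj \<bullet> a\<bar> * norm b" using h frac_cmp(2)[OF na[OF a0] nx nb[OF a0]] by blast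
    hence "(a \<bullet> b) * norm xj + norm b * (a \<bullet> xj) > 0" "(a \<bullet> b) * norm xj - norm b * (a \<bullet> xj) > 0"
    proof -
      have "(xj \<bullet> a) * norm b \<le> \<bar>xj \<bullet> a\<bar> * norm b" "-(xj \<bullet> a) * norm b \<le> \<bar>xj \<bullet> a\<bar> * norm b"
        by (intro mult_right_mono; simp)+
      moreover note \<open>(b \<bullet> a) * norm xj > \<bar>xj \<bullet> a\<bar> * norm b\<close>
      ultimately show "(a \<bullet> b) * norm xj + norm b * (a \<bullet> xj) > 0" "(a \<bullet> b) * norm xj - norm b * (a \<bullet> xj) > 0"
        by (simp_all add: inner_commute mult.commute)
    qed
    thus "P1 \<and> N1" using hP1 hN1 h by blast
  next
    assume h: "xj \<bullet> a > 0 \<and> (b \<bullet> a) / (norm b * norm a) \<le> (xj \<bullet> a) / (norm xj * norm a)"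
    hence a0: "a \<noteq> 0" by auto
    have "(b \<bullet> a) * norm xj \<le> (xj \<bullet> a) * norm b" using h frac_cmp(1)[OF na nb nx, OF a0 a0] by blast
    hence "(a \<bullet> b) * norm xj - norm b * (a \<bullet> xj) \<le> 0" by (simp add: inner_commute mult.commute)
    moreover have "(a \<bullet> b) * norm xj + norm b * (a \<bullet> xj) > 0"
      using ab[OF a0] nx nb[OF a0] h by (simp add: inner_commute add_pos_pos)
    ultimately show "P1 \<and> N2" using hP1 hN2 a0 by blast
  next
    assume h: "xj \<bullet> a < 0 \<and> (b \<bullet> a) / (norm b * norm a) \<le> - (xj \<bullet> a) / (norm xj * norm a)"
    hence a0: "a \<noteq> 0" by auto
    have "(b \<bullet> a) * norm xj \<le> - (xj \<bullet> a) * norm b" using h frac_cmp(1)[OF na nb nx, OF a0 a0] by blast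
    hence "(a \<bullet> b) * norm xj + norm b * (a \<bullet> xj) \<le> 0" by (simp add: inner_commute mult.commute)
    moreover have "(a \<bullet> b) * norm xj - norm b * (a \<bullet> xj) > 0"
    proof -
      have "(a \<bullet> b) * norm xj > 0" using ab[OF a0] nx by simp
      moreover have "norm b * (a \<bullet> xj) < 0" using nb[OF a0] h by (simp add: inner_commute mult_pos_neg)
      ultimately show ?thesis by linarith
    qed
    ultimately show "P2 \<and> N1" using hP2 hN1 a0 by blast
  next
    assume "a = 0"
    thus "N2 \<and> P2" using hN2 hP2 by simp
  qed
qed

end
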